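(* Let $X$ be a random variable taking values in a metric space $(\mathcal{X}, d)$ and $Y \in [0,1]$ a target outcome. Let $L > 0$, $\alpha \ge 0$, and let $\mathcal{F}^{\text{Lip}(L,d)}$ be the set of functions $f : \mathcal{X} \to [0,1]$ satisfying $|f(x) - f(x')| \le L\, d(x, x')$ for all $x, x' \in \mathcal{X}$. Let $\{S_k\}_{k \in K}$, $K \subseteq \mathbb{N}$, be a partition of $\mathcal{X}$ in which each $S_k$ has diameter at most $4\alpha / L$ with respect to $d$ (and $\mathbb{P}(X \in S_k) > 0$). Then $\{S_k\}_{k \in K}$ is an $\alpha$-multicalibrated partition with respect to $\mathcal{F}^{\text{Lip}(L,d)}$ and $Y$.
   Context: A set $S \subseteq \mathcal{X}$ is $\alpha$-indistinguishable with respect to a function class $\mathcal{F}$ and $Y$ if $|\mathrm{Cov}(f(X), Y \mid X \in S)| \le \alpha$ for all $f \in \mathcal{F}$. Sets $\{S_k\}$ form an $\alpha$-multicalibrated partition with respect to $\mathcal{F}$ and $Y$ if they partition $\mathcal{X}$ and each $S_k$ is $\alpha$-indistinguishable with respect to $\mathcal{F}$ and $Y$. *)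

theory Defs
  imports "HOL-Probability.Probability"
begin

definition cond_expect_event :: "'b measure \<Rightarrow> 'b set \<Rightarrow> ('b \<Rightarrow> real) \<Rightarrow> real" where
  "cond_expect_event M A Z = (\<integral>\<omega>. indicator A \<omega> * Z \<omega> \<partial>M) / measure M A"

definition cond_cov :: "'b measure \<Rightarrow> 'b set \<Rightarrow> ('b \<Rightarrow> real) \<Rightarrow> ('b \<Rightarrow> real) \<Rightarrow> real" where
  "cond_cov M A U V =
     cond_expect_event M A (\<lambda>\<omega>. U \<omega> * V \<omega>) - cond_expect_event M A U * cond_expect_event M A V"

definition indistinguishable ::
  "'b measure \<Rightarrow> ('b \<Rightarrow> 'a) \<Rightarrow> ('b \<Rightarrow> real) \<Rightarrow> ('a \<Rightarrow> real) set \<Rightarrow> real \<Rightarrow> 'a set \<Rightarrow> bool" where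
  "indistinguishable M X Y F \<alpha> S \<longleftrightarrow>
     (\<forall>f\<in>F. \<bar>cond_cov M (X -` S \<inter> space M) (\<lambda>\<omega>. f (X \<omega>)) Y\<bar> \<le> \<alpha>)"

definition multicalibrated_partition ::
  "'b measure \<Rightarrow> ('b \<Rightarrow> 'a) \<Rightarrow> ('b \<Rightarrow> real) \<Rightarrow> ('a \<Rightarrow> real) set \<Rightarrow> real \<Rightarrow> nat set \<Rightarrow> (nat \<Rightarrow> 'a set) \<Rightarrow> bool" where
  "multicalibrated_partition M X Y F \<alpha> K S \<longleftrightarrow>
     (\<forall>i\<in>K. \<forall>j\<in>K. i \<noteq> j \<longrightarrow> S i \<inter> S j = {}) \<and>
     (\<Union>k\<in>K. S k) = UNIV \<and>
     (\<forall>k\<in>K. indistinguishable M X Y F \<alpha> (S k))"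

definition lip_class :: "real \<Rightarrow> ('a::metric_space \<Rightarrow> real) set" where
  "lip_class L = {f. (\<forall>x. 0 \<le> f x \<and> f x \<le> 1) \<and> (\<forall>x x'. \<bar>f x - f x'\<bar> \<le> L * dist x x')}"

end

theory Submission
  imports Defs
begin

lemma cov_bound:
  assumes P: "prob_space M" and A: "A \<in> sets M" and pos: "measure M A > 0"
    and Um: "U \<in> borel_measurable M" and Vm: "V \<in> borel_measurable M"
    and V01: "\<forall>\<omega>\<in>space M. 0 \<le> V \<omega> \<and> V \<omega> \<le> 1"
    and Ub: "\<forall>\<omega>\<in>space M. \<bar>U \<omega>\<bar> \<le> 1"
    and Uc: "\<forall>\<omega>\<in>A. \<bar>U \<omega> - c\<bar> \<le> r"
  shows "\<bar>cond_cov M A U V\<bar> \<le> r / 2"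
proof -
  interpret prob_space M by (rule P)
  define p where "p = measure M A"
  define I where "I = (\<lambda>Z::_\<Rightarrow>real. \<integral>\<omega>. indicator A \<omega> * Z \<omega> \<partial>M)"
  have int: "integrable M (\<lambda>\<omega>. indicator A \<omega> * Z \<omega>)"
    if "Z \<in> borel_measurable M" "\<forall>\<omega>\<in>space M. \<bar>Z \<omega>\<bar> \<le> B" for Z :: "_ \<Rightarrow> real" and B :: real
  proof (rule integrable_const_bound[where B=B])
    show "AE x in M. norm (indicator A x * Z x) \<le> B"
      using that by (intro AE_I2) (auto simp: indicator_def abs_mult intro: order_trans[OF abs_ge_zero])
    show "(\<lambda>\<omega>. indicator A \<omega> * Z \<omega>) \<in> borel_measurable M"
      using that A by measurable
  qed
  have iU: "integrable M (\<lambda>\<omega>. indicator A \<omega> * U \<omega>)" using int[OF Um Ub] .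
  have iV: "integrable M (\<lambda>\<omega>. indicator A \<omega> * V \<omega>)"
    using int[OF Vm, of 1] V01 by auto
  have iUV: "integrable M (\<lambda>\<omega>. indicator A \<omega> * (U \<omega> * V \<omega>))"
    using int[of "\<lambda>\<omega>. U \<omega> * V \<omega>" 1] Um Vm V01 Ub
    by (auto simp: abs_mult intro!: mult_le_one)
  have i1: "integrable M (\<lambda>\<omega>. indicator A \<omega> * (1::real))"
    using int[of "\<lambda>_. 1" 1] by auto
  have I1: "I (\<lambda>_. 1) = p" unfolding I_def p_def using A by simp
  define m where "m = I V / p"
  have pp: "p > 0" using pos p_def by simp
  have cov: "cond_cov M A U V = I (\<lambda>\<omega>. (U \<omega> - c) * (V \<omega> - m)) / p"
  proof -
    have "I (\<lambda>\<omega>. (U \<omega> - c) * (V \<omega> - m)) =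
        I (\<lambda>\<omega>. U \<omega> * V \<omega>) - m * I U - c * I V + c * m * I (\<lambda>_. 1)"
      unfolding I_def
      using iU iV iUV i1
      by (simp add: algebra_simps)
    moreover have "cond_cov M A U V = I (\<lambda>\<omega>. U \<omega> * V \<omega>) / p - (I U / p) * (I V / p)"
      unfolding cond_cov_def cond_expect_event_def I_def p_def by simp
    moreover have "I V = m * p" using pp unfolding m_def by simp
    ultimately show ?thesis
      using I1 pp by (simp add: field_simps)
  qed
  have Asp: "A \<subseteq> space M" using A sets.sets_into_space by blast
  have "A \<noteq> {}" using pos by auto
  then obtain \<omega>0 where "\<omega>0 \<in> A" by blast
  hence r0: "r \<ge> 0" using Uc by (meson abs_ge_zero order_trans)
  have IV0: "0 \<le> I V" unfolding I_def using V01
    by (intro integral_nonneg_AE AE_I2) (auto simp: indicator_def)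
  have IVp: "I V \<le> p" unfolding I1[symmetric] unfolding I_def
    using iV i1 V01 by (intro integral_mono) (auto simp: indicator_def)
  have m0: "0 \<le> m" "m \<le> 1" using IV0 IVp pp unfolding m_def by auto
  have IVm: "I V = m * p" using pp unfolding m_def by simp
  define G where "G = (\<lambda>\<omega>. (U \<omega> - c) * (V \<omega> - m))"
  define H where "H = (\<lambda>\<omega>. r * (V \<omega> * (1 - m) + m * (1 - V \<omega>)))"
  have Gm: "G \<in> borel_measurable M" unfolding G_def using Um Vm by measurable
  have Hm: "H \<in> borel_measurable M" unfolding H_def using Vm by measurable
  have iG: "integrable M (\<lambda>\<omega>. indicator A \<omega> * G \<omega>)"
  proof (rule int[OF Gm, of "(1 + \<bar>c\<bar>) * 1"], intro ballI)
    fix \<omega> assume "\<omega> \<in> space M"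
    hence "\<bar>U \<omega> - c\<bar> \<le> 1 + \<bar>c\<bar>" "\<bar>V \<omega> - m\<bar> \<le> 1" using Ub V01 m0 by auto
    thus "\<bar>G \<omega>\<bar> \<le> (1 + \<bar>c\<bar>) * 1" unfolding G_def abs_mult
      by (intro mult_mono) auto
  qed
  have iaG: "integrable M (\<lambda>\<omega>. \<bar>indicator A \<omega> * G \<omega>\<bar>)" using iG by (rule integrable_abs)
  have iH: "integrable M (\<lambda>\<omega>. indicator A \<omega> * H \<omega>)"
  proof (rule int[OF Hm, of "r * 1"], intro ballI)
    fix \<omega> assume "\<omega> \<in> space M"
    hence v: "0 \<le> V \<omega>" "V \<omega> \<le> 1" using V01 by auto
    have a: "0 \<le> V \<omega> * (1 - m) + m * (1 - V \<omega>)" using v m0 by simp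
    have b: "V \<omega> * (1 - m) + m * (1 - V \<omega>) \<le> 1"
      proof -
      have "0 \<le> (1 - V \<omega>) * (1 - m)" "0 \<le> m * V \<omega>" using v m0 by auto
      thus ?thesis by (simp add: algebra_simps)
    qed
    show "\<bar>H \<omega>\<bar> \<le> r * 1" unfolding H_def abs_mult using a b r0
      by (intro mult_mono) auto
  qed
  have IH: "I H = r * (2 * m * (1 - m) * p)"
  proof -
    have eq: "(\<lambda>\<omega>. indicator A \<omega> * H \<omega>) = (\<lambda>\<omega>. (r * (1 - 2 * m)) * (indicator A \<omega> * V \<omega>) + (r * m) * (indicator A \<omega> * 1))"
      unfolding H_def by (auto simp: algebra_simps)
    have "I H = (r * (1 - 2 * m)) * I V + (r * m) * I (\<lambda>_. 1)"
      unfolding I_def eq using iV i1 by (simp del: mult_1_right)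
    hence "I H = r * ((1 - m) * I V + m * (I (\<lambda>_. 1) - I V))" by (simp add: algebra_simps)
    thus ?thesis using I1 IVm by (simp add: algebra_simps)
  qed
  have pw: "\<bar>indicator A \<omega> * G \<omega>\<bar> \<le> indicator A \<omega> * H \<omega>" if "\<omega> \<in> space M" for \<omega>
  proof (cases "\<omega> \<in> A")
    case True
    have v: "0 \<le> V \<omega>" "V \<omega> \<le> 1" using V01 that by auto
    have "\<bar>V \<omega> - m\<bar> \<le> V \<omega> * (1 - m) + m * (1 - V \<omega>)"
      using v m0 mult_left_mono[of "V \<omega>" 1 m] mult_right_mono[of m 1 "V \<omega>"]
      by (cases "V \<omega> \<ge> m") (auto simp: algebra_simps)
    hence "\<bar>U \<omega> - c\<bar> * \<bar>V \<omega> - m\<bar> \<le> r * (V \<omega> * (1 - m) + m * (1 - V \<omega>))"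
      using Uc True r0 by (intro mult_mono) auto
    thus ?thesis using True unfolding G_def H_def by (simp add: abs_mult)
  qed simp
  have "\<bar>I G\<bar> \<le> I H"
  proof -
    have "\<bar>I G\<bar> \<le> (\<integral>\<omega>. \<bar>indicator A \<omega> * G \<omega>\<bar> \<partial>M)"
      unfolding I_def by (rule integral_abs_bound)
    also have "\<dots> \<le> I H" unfolding I_def using iaG iH pw by (intro integral_mono) auto
    finally show ?thesis .
  qed
  also have "\<dots> \<le> r * p / 2"
  proof -
    have "m * (1 - m) \<le> 1/4" using zero_le_power2[of "m - 1/2"] by (simp add: power2_eq_square algebra_simps)
    hence "2 * m * (1 - m) * p \<le> p / 2" using pp mult_right_mono[of "m * (1 - m)" "1/4" p] by (simp add: algebra_simps)
    thus ?thesis unfolding IH using r0 mult_left_mono[of "2 * m * (1 - m) * p" "p/2" r] by simp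
  qed
  finally show ?thesis unfolding cov G_def[symmetric] using pp by (simp add: divide_simps mult.commute)
qed


lemma lip_cont:
  assumes "L > 0" "\<forall>x x'. \<bar>f x - f x'\<bar> \<le> L * dist x x'"
  shows "continuous_on UNIV (f :: 'a::metric_space \<Rightarrow> real)"
  unfolding continuous_on_iff
proof (intro ballI allI impI)
  fix x :: 'a and e :: real assume e: "e > 0"
  show "\<exists>d>0. \<forall>x'\<in>UNIV. dist x' x < d \<longrightarrow> dist (f x') (f x) < e"
  proof (intro exI[of _ "e / L"] conjI ballI impI)
    show "e / L > 0" using e assms by simp
    fix x' assume "dist x' x < e / L"
    hence "L * dist x' x < e" using assms by (simp add: field_simps)
    moreover have "\<bar>f x' - f x\<bar> \<le> L * dist x' x" using assms by blast
    ultimately show "dist (f x') (f x) < e" by (simp add: dist_real_def)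
  qed
qed

lemma mid_exists:
  assumes "T \<noteq> {}" "\<forall>x. 0 \<le> f x \<and> f x \<le> (1::real)"
    and "\<forall>x\<in>T. \<forall>x'\<in>T. f x - f x' \<le> d"
  shows "\<exists>c. \<forall>x\<in>T. \<bar>f x - c\<bar> \<le> d / 2"
proof -
  define a where "a = Inf (f ` T)"
  define b where "b = Sup (f ` T)"
  have bdb: "bdd_above (f ` T)" using assms(2) by (auto intro: bdd_aboveI[of _ 1])
  have bdb2: "bdd_below (f ` T)" using assms(2) by (auto intro: bdd_belowI[of _ 0])
  have le: "a \<le> f x" "f x \<le> b" if "x \<in> T" for x
    unfolding a_def b_def using that bdb bdb2 by (auto intro: cInf_lower cSup_upper)
  have "b \<le> f x' + d" if "x' \<in> T" for x'
  proof -
    have "\<forall>y\<in>f ` T. y \<le> f x' + d"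
    proof
      fix y assume "y \<in> f ` T"
      then obtain z where "z \<in> T" "y = f z" by blast
      thus "y \<le> f x' + d" using assms(3) that by force
    qed
    thus ?thesis unfolding b_def using assms(1) by (intro cSup_least) auto
  qed
  hence "b - d \<le> a" unfolding a_def using assms(1) by (intro cInf_greatest) force+
  hence "\<forall>x\<in>T. \<bar>f x - (a + b) / 2\<bar> \<le> d / 2"
  proof (intro ballI)
    fix x assume "x \<in> T"
    from le[OF this] \<open>b - d \<le> a\<close> show "\<bar>f x - (a + b) / 2\<bar> \<le> d / 2" unfolding abs_le_iff by (auto simp: field_simps)
  qed
  thus ?thesis by blast
qed

theorem corollary5:
  fixes M :: "'b measure" and X :: "'b \<Rightarrow> 'a::metric_space" and Y :: "'b \<Rightarrow> real"
    and L \<alpha> :: real and K :: "nat set" and S :: "nat \<Rightarrow> 'a set"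
  assumes "prob_space M"
    and "X \<in> measurable M borel"
    and "Y \<in> borel_measurable M"
    and "\<forall>\<omega>\<in>space M. 0 \<le> Y \<omega> \<and> Y \<omega> \<le> 1"
    and "L > 0" and "\<alpha> \<ge> 0"
    and "\<forall>i\<in>K. \<forall>j\<in>K. i \<noteq> j \<longrightarrow> S i \<inter> S j = {}"
    and "(\<Union>k\<in>K. S k) = UNIV"
    and "\<forall>k\<in>K. \<forall>x\<in>S k. \<forall>x'\<in>S k. dist x x' \<le> 4 * \<alpha> / L"
    and "\<forall>k\<in>K. measure M (X -` S k \<inter> space M) > 0"
  shows "multicalibrated_partition M X Y (lip_class L) \<alpha> K S"
  unfolding multicalibrated_partition_def indistinguishable_def
proof (intro conjI ballI)
  fix k and f :: "'a \<Rightarrow> real" assume k: "k \<in> K" and f: "f \<in> lip_class L"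
  let ?A = "X -` S k \<inter> space M"
  have pos: "measure M ?A > 0" using assms(10) k by blast
  hence A: "?A \<in> sets M" using measure_notin_sets by force
  have f01: "\<forall>x. 0 \<le> f x \<and> f x \<le> 1" and fl: "\<forall>x x'. \<bar>f x - f x'\<bar> \<le> L * dist x x'"
    using f unfolding lip_class_def by auto
  have fm: "f \<in> borel_measurable borel"
    by (rule borel_measurable_continuous_onI[OF lip_cont[OF assms(5) fl]])
  have Um: "(\<lambda>\<omega>. f (X \<omega>)) \<in> borel_measurable M"
    using measurable_comp[OF assms(2) fm] by (simp add: comp_def)
  have ne: "S k \<noteq> {}" using pos by auto
  have "\<forall>x\<in>S k. \<forall>x'\<in>S k. f x - f x' \<le> 4 * \<alpha>"
  proof (intro ballI)
    fix x x' assume "x \<in> S k" "x' \<in> S k"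
    hence "dist x x' \<le> 4 * \<alpha> / L" using assms(9) k by blast
    hence "L * dist x x' \<le> 4 * \<alpha>" using assms(5) by (simp add: field_simps)
    moreover have "\<bar>f x - f x'\<bar> \<le> L * dist x x'" using fl by blast
    ultimately show "f x - f x' \<le> 4 * \<alpha>" by linarith
  qed
  then obtain c where c: "\<forall>x\<in>S k. \<bar>f x - c\<bar> \<le> 4 * \<alpha> / 2"
    using mid_exists[OF ne f01] by blast
  have "\<bar>cond_cov M ?A (\<lambda>\<omega>. f (X \<omega>)) Y\<bar> \<le> (4 * \<alpha> / 2) / 2"
    by (rule cov_bound[OF assms(1) A pos Um assms(3) assms(4)]) (use f01 c in auto)
  thus "\<bar>cond_cov M ?A (\<lambda>\<omega>. f (X \<omega>)) Y\<bar> \<le> \<alpha>" by simp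
qed (use assms in auto)

end
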